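(* Let $n,k,d\in\mathbb{N}$, let $a_{1:n}\in(\{0,1\}^d)^n$ be arbitrary, let $h^*\in\mathcal{C}^k_d$, and let $x_t:=h^*(a_t)$ for $t=1,\dots,n$. Then $\mathcal{L}_n(\textsc{Alg1}^k_d)\le 2^{2k+1}d^{2k}$ and $\mathcal{L}_n(\textsc{Alg2}^k_d)\le(2^kd^k+1)\log_2(n+1)$.
   Context: Literals over variables $x_1,\dots,x_d$ are elements of $\{x_1,\dots,x_d,\neg x_1,\dots,\neg x_d\}$. $\mathcal{C}^k_d$ is the class of $k$-CNF Boolean functions on $\{0,1\}^d$: conjunctions $c_1\wedge\dots\wedge c_m$ ($m\ge0$) where each clause $c_y$ is a disjunction of $k$ literals. Let $D:=(2d)^k$ and index the $D$ ordered $k$-tuples $(\ell_1,\dots,\ell_k)$ of literals by $j=1,\dots,D$; the map $\phi:\{0,1\}^d\to\{0,1\}^D$ sends $a$ to the vector whose $j$-th component is $\ell_1(a)\vee\dots\vee\ell_k(a)$ for the $j$-th tuple. For $\mathcal{S}\subseteq\{1,\dots,D\}$, $h_{\mathcal{S}}(c)=\bigwedge_{j\in\mathcal{S}}c^j$. Predictor $\zeta_D$ (dimension $D$, $\alpha=2^{-D/2^D}$): at time $t$, with $\mathcal{A}_t=\{c_\tau:\tau<t,x_\tau=0\}$ and $w_j=\prod_{\tau<t:x_\tau=1}c_\tau^j$ (1 if empty), it predicts $0$ with probability $1$ if $c_t\in\mathcal{A}_t$ and otherwise predicts $1$ with probability $\prod_{j=1}^D\frac{(1-\alpha)+\alpha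 w_jc_t^j}{(1-\alpha)+\alpha w_j}$. Predictor $\pi_D$: with $\mathcal{D}_t=\{j: c_\tau^j=1\ \forall\tau<t\text{ with }x_\tau=1\}$ and $y_t=\bigwedge_{j\in\mathcal{D}_t}c_t^j$, it assigns probability $\frac{t}{t+1}$ to $y_t$ and $\frac1{t+1}$ to $1-y_t$. $\textsc{Alg1}^k_d$ (resp. $\textsc{Alg2}^k_d$) is the predictor obtained by running $\zeta_D$ (resp. $\pi_D$) on the transformed side information $c_t:=\phi(a_t)$ with labels $x_t$. The cumulative log-loss of a predictor $\rho$ is $\mathcal{L}_n(\rho)=-\log_2\prod_{t=1}^n\rho(x_t\mid x_{<t};a_{1:t})$. *)

theory Defs
  imports Complex_Main
begin

text \<open>Boolean vectors in {0,1}^d are modelled as functions nat => bool; only the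
  coordinates 0..<d are relevant. Variables are x_0,...,x_{d-1}.\<close>

datatype literal = Pos nat | Neg nat

fun lit_var :: "literal \<Rightarrow> nat" where
  "lit_var (Pos i) = i" | "lit_var (Neg i) = i"

fun lit_eval :: "literal \<Rightarrow> (nat \<Rightarrow> bool) \<Rightarrow> bool" where
  "lit_eval (Pos i) a = a i" | "lit_eval (Neg i) a = (\<not> a i)"

definition literals :: "nat \<Rightarrow> literal set" where
  "literals d = {l. lit_var l < d}"

definition clause_eval :: "literal list \<Rightarrow> (nat \<Rightarrow> bool) \<Rightarrow> bool" where
  "clause_eval c a = (\<exists>l\<in>set c. lit_eval l a)"

definition kCNF :: "nat \<Rightarrow> nat \<Rightarrow> ((nat \<Rightarrow> bool) \<Rightarrow> bool) set" where
  "kCNF k d = {h. \<exists>cls :: literal list list.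
      (\<forall>c\<in>set cls. length c = k \<and> set c \<subseteq> literals d) \<and>
      h = (\<lambda>a. \<forall>c\<in>set cls. clause_eval c a)}"

definition tuples :: "nat \<Rightarrow> nat \<Rightarrow> literal list set" where
  "tuples k d = {ls. length ls = k \<and> set ls \<subseteq> literals d}"

definition phi :: "(nat \<Rightarrow> bool) \<Rightarrow> literal list \<Rightarrow> bool" where
  "phi a = (\<lambda>ls. clause_eval ls a)"

text \<open>Generic predictors with D = card J components indexed by the finite set J.
  cs t is the side information c_t, xs t the label x_t; times start at 1.\<close>

definition zeta_alpha :: "'j set \<Rightarrow> real" where
  "zeta_alpha J = 2 powr (- (real (card J) / 2 ^ card J))"

definition zeta_w :: "'j set \<Rightarrow> (nat \<Rightarrow> 'j \<Rightarrow> bool) \<Rightarrow> (nat \<Rightarrow> bool) \<Rightarrow> nat \<Rightarrow> 'j \<Rightarrow> real" where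
  "zeta_w J cs xs t j = (\<Prod>\<tau>\<in>{\<tau>\<in>{1..<t}. xs \<tau>}. of_bool (cs \<tau> j))"

definition zeta_prob1 :: "'j set \<Rightarrow> (nat \<Rightarrow> 'j \<Rightarrow> bool) \<Rightarrow> (nat \<Rightarrow> bool) \<Rightarrow> nat \<Rightarrow> real" where
  "zeta_prob1 J cs xs t =
     (if \<exists>\<tau>\<in>{1..<t}. \<not> xs \<tau> \<and> (\<forall>j\<in>J. cs \<tau> j = cs t j) then 0
      else (let \<alpha> = zeta_alpha J in
            \<Prod>j\<in>J. ((1 - \<alpha>) + \<alpha> * zeta_w J cs xs t j * of_bool (cs t j))
                   / ((1 - \<alpha>) + \<alpha> * zeta_w J cs xs t j)))"

definition zeta_cond :: "'j set \<Rightarrow> (nat \<Rightarrow> 'j \<Rightarrow> bool) \<Rightarrow> (nat \<Rightarrow> bool) \<Rightarrow> nat \<Rightarrow> real" where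
  "zeta_cond J cs xs t = (if xs t then zeta_prob1 J cs xs t else 1 - zeta_prob1 J cs xs t)"

definition pi_y :: "'j set \<Rightarrow> (nat \<Rightarrow> 'j \<Rightarrow> bool) \<Rightarrow> (nat \<Rightarrow> bool) \<Rightarrow> nat \<Rightarrow> bool" where
  "pi_y J cs xs t =
     (\<forall>j\<in>{j\<in>J. \<forall>\<tau>\<in>{1..<t}. xs \<tau> \<longrightarrow> cs \<tau> j}. cs t j)"

definition pi_cond :: "'j set \<Rightarrow> (nat \<Rightarrow> 'j \<Rightarrow> bool) \<Rightarrow> (nat \<Rightarrow> bool) \<Rightarrow> nat \<Rightarrow> real" where
  "pi_cond J cs xs t =
     (if xs t = pi_y J cs xs t then real t / (real t + 1) else 1 / (real t + 1))"

definition seq_prob :: "(nat \<Rightarrow> real) \<Rightarrow> nat \<Rightarrow> real" where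
  "seq_prob \<rho> n = (\<Prod>t=1..n. \<rho> t)"

definition log_loss :: "(nat \<Rightarrow> real) \<Rightarrow> nat \<Rightarrow> real" where
  "log_loss \<rho> n = - log 2 (seq_prob \<rho> n)"

definition Alg1_cond :: "nat \<Rightarrow> nat \<Rightarrow> (nat \<Rightarrow> nat \<Rightarrow> bool) \<Rightarrow> (nat \<Rightarrow> bool) \<Rightarrow> nat \<Rightarrow> real" where
  "Alg1_cond k d as xs = zeta_cond (tuples k d) (\<lambda>t. phi (as t)) xs"

definition Alg2_cond :: "nat \<Rightarrow> nat \<Rightarrow> (nat \<Rightarrow> nat \<Rightarrow> bool) \<Rightarrow> (nat \<Rightarrow> bool) \<Rightarrow> nat \<Rightarrow> real" where
  "Alg2_cond k d as xs = pi_cond (tuples k d) (\<lambda>t. phi (as t)) xs"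

end

theory Submission imports Defs begin


definition Wset :: "'j set \<Rightarrow> (nat \<Rightarrow> 'j \<Rightarrow> bool) \<Rightarrow> (nat \<Rightarrow> bool) \<Rightarrow> nat \<Rightarrow> 'j set" where
 "Wset J cs xs t = {j\<in>J. \<forall>\<tau>\<in>{1..<t}. xs \<tau> \<longrightarrow> cs \<tau> j}"

definition Fset :: "'j set \<Rightarrow> (nat \<Rightarrow> 'j \<Rightarrow> bool) \<Rightarrow> (nat \<Rightarrow> bool) \<Rightarrow> nat \<Rightarrow> nat set" where
 "Fset J cs xs n = {t\<in>{1..n}. \<not> xs t \<and> \<not>(\<exists>\<tau>\<in>{1..<t}. \<not> xs \<tau> \<and> (\<forall>j\<in>J. cs \<tau> j = cs t j))}"

lemma seq_prob_Suc: "seq_prob \<rho> (Suc n) = seq_prob \<rho> n * \<rho> (Suc n)"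
  unfolding seq_prob_def by (simp add: prod.nat_ivl_Suc' mult.commute)

lemma seq_prob_0: "seq_prob \<rho> 0 = 1" unfolding seq_prob_def by simp

lemma zeta_w_eq: "zeta_w J cs xs t j = of_bool (\<forall>\<tau>\<in>{1..<t}. xs \<tau> \<longrightarrow> cs \<tau> j)"
proof (cases "\<forall>\<tau>\<in>{1..<t}. xs \<tau> \<longrightarrow> cs \<tau> j")
  case True
  then show ?thesis unfolding zeta_w_def by (simp add: prod.neutral)
next
  case False
  then show ?thesis unfolding zeta_w_def by (subst prod_zero) auto
qed

lemma alpha_pos: "0 < zeta_alpha J" unfolding zeta_alpha_def by simp

lemma alpha_le1: "zeta_alpha J \<le> 1"
proof -
  have "1 \<le> (2::real) powr (real (card J) / 2 ^ card J)"
    by (rule ge_one_powr_ge_zero) auto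
  then show ?thesis unfolding zeta_alpha_def by (simp add: powr_minus divide_simps)
qed

lemma alpha_lt1: "finite J \<Longrightarrow> J \<noteq> {} \<Longrightarrow> zeta_alpha J < 1"
proof -
  assume "finite J" "J \<noteq> {}"
  then have "card J > 0" by (simp add: card_gt_0_iff)
  then have "1 < (2::real) powr (real (card J) / 2 ^ card J)"
    by (intro gr_one_powr) auto
  then show ?thesis unfolding zeta_alpha_def by (simp add: powr_minus divide_simps)
qed

lemma prob1_form:
  assumes "finite J" "\<not> (\<exists>\<tau>\<in>{1..<t}. \<not> xs \<tau> \<and> (\<forall>j\<in>J. cs \<tau> j = cs t j))"
  shows "zeta_prob1 J cs xs t = (1 - zeta_alpha J) ^ card {j\<in>Wset J cs xs t. \<not> cs t j}"
proof (cases "J = {}")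
  case True then show ?thesis using assms unfolding zeta_prob1_def Wset_def by simp
next
  case False
  let ?a = "zeta_alpha J"
  have a1: "?a < 1" using alpha_lt1 assms(1) False by blast
  have "zeta_prob1 J cs xs t = (\<Prod>j\<in>J. if j \<in> Wset J cs xs t \<and> \<not> cs t j then 1 - ?a else 1)"
    unfolding zeta_prob1_def if_not_P[OF assms(2)] Let_def
    apply (rule prod.cong, simp)
    using a1 by (auto simp: zeta_w_eq Wset_def)
  also have "\<dots> = (1-?a) ^ card (J \<inter> {j. j \<in> Wset J cs xs t \<and> \<not> cs t j})"
    using assms(1) by (simp add: prod.If_cases)
  also have "J \<inter> {j. j \<in> Wset J cs xs t \<and> \<not> cs t j} = {j\<in>Wset J cs xs t. \<not> cs t j}"
    by (auto simp: Wset_def)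
  finally show ?thesis .
qed


lemma alg1_inv:
  assumes fin: "finite J" and SJ: "S \<subseteq> J" and xsS: "\<And>t. xs t = (\<forall>j\<in>S. cs t j)"
  shows "seq_prob (zeta_cond J cs xs) n \<ge>
    (1 - zeta_alpha J) ^ card (J - Wset J cs xs (Suc n)) * zeta_alpha J ^ card (Fset J cs xs n)"
proof (induction n)
  case 0
  have "Wset J cs xs (Suc 0) = J" by (auto simp: Wset_def)
  moreover have "Fset J cs xs 0 = {}" by (auto simp: Fset_def)
  ultimately show ?case by (simp add: seq_prob_0)
next
  case (Suc n)
  let ?a = "zeta_alpha J"
  let ?W = "Wset J cs xs (Suc n)"
  let ?W' = "Wset J cs xs (Suc (Suc n))"
  let ?L = "(1 - ?a) ^ card (J - ?W) * ?a ^ card (Fset J cs xs n)"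
  let ?B = "{j\<in>?W. \<not> cs (Suc n) j}"
  have a0: "0 < ?a" and a1: "?a \<le> 1" by (rule alpha_pos, rule alpha_le1)
  have L0: "0 \<le> ?L" using a0 a1 by simp
  have SW: "S \<subseteq> ?W" using SJ xsS by (auto simp: Wset_def)
  have WJ: "?W \<subseteq> J" by (auto simp: Wset_def)
  have W'eq: "?W' = (if xs (Suc n) then ?W - ?B else ?W)"
    by (auto simp: Wset_def less_Suc_eq)
  show ?case
  proof (cases "xs (Suc n)")
    case True
    have nr: "\<not> (\<exists>\<tau>\<in>{1..<Suc n}. \<not> xs \<tau> \<and> (\<forall>j\<in>J. cs \<tau> j = cs (Suc n) j))"
      using True SJ xsS by blast
    have c: "zeta_cond J cs xs (Suc n) = (1 - ?a) ^ card ?B"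
      using prob1_form[OF fin nr] True by (simp add: zeta_cond_def)
    have F: "Fset J cs xs (Suc n) = Fset J cs xs n" using True by (auto simp: Fset_def le_Suc_eq)
    have "J - ?W' = (J - ?W) \<union> ?B" using True W'eq WJ by auto
    moreover have "(J - ?W) \<inter> ?B = {}" by auto
    moreover have "finite ?B" "finite (J - ?W)" using fin WJ by (auto intro: finite_subset)
    ultimately have card: "card (J - ?W') = card (J - ?W) + card ?B"
      by (simp add: card_Un_disjoint)
    have "?L * (1 - ?a) ^ card ?B \<le> seq_prob (zeta_cond J cs xs) n * (1 - ?a) ^ card ?B"
      using Suc.IH a1 by (intro mult_right_mono) auto
    then show ?thesis by (simp add: seq_prob_Suc c card power_add F mult_ac)
  next
    case False
    have W'W: "?W' = ?W" using False W'eq by simp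
    show ?thesis
    proof (cases "\<exists>\<tau>\<in>{1..<Suc n}. \<not> xs \<tau> \<and> (\<forall>j\<in>J. cs \<tau> j = cs (Suc n) j)")
      case True
      have c: "zeta_cond J cs xs (Suc n) = 1"
        using True False by (simp add: zeta_cond_def zeta_prob1_def)
      have F: "Fset J cs xs (Suc n) = Fset J cs xs n" using True by (auto simp: Fset_def le_Suc_eq)
      show ?thesis using Suc.IH by (simp add: seq_prob_Suc c F W'W)
    next
      case nr: False
      have F: "Fset J cs xs (Suc n) = insert (Suc n) (Fset J cs xs n)"
        using nr False by (auto simp: Fset_def le_Suc_eq)
      have Fn: "Suc n \<notin> Fset J cs xs n" "finite (Fset J cs xs n)" by (auto simp: Fset_def)
      obtain j where j: "j \<in> S" "\<not> cs (Suc n) j" using False xsS by blast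
      have "j \<in> ?B" using j SW by auto
      moreover have "finite ?B" using fin WJ by (auto intro: finite_subset)
      ultimately have cB: "1 \<le> card ?B" by (metis One_nat_def Suc_leI card_gt_0_iff empty_iff)
      have "(1 - ?a) ^ card ?B \<le> (1 - ?a) ^ 1"
        by (rule power_decreasing[OF cB]) (use a0 a1 in auto)
      then have c: "zeta_cond J cs xs (Suc n) \<ge> ?a"
        using prob1_form[OF fin nr] False by (simp add: zeta_cond_def)
      have "?L * ?a \<le> seq_prob (zeta_cond J cs xs) n * zeta_cond J cs xs (Suc n)"
        using Suc.IH c L0 a0 by (intro mult_mono) auto
      then show ?thesis by (simp add: seq_prob_Suc F Fn W'W mult_ac)
    qed
  qed
qed

lemma Fset_card:
  assumes "finite J" shows "card (Fset J cs xs n) \<le> 2 ^ card J"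
proof -
  let ?f = "\<lambda>t. {j\<in>J. cs t j}"
  have inj: "inj_on ?f (Fset J cs xs n)"
  proof (rule inj_onI)
    fix s t assume s: "s \<in> Fset J cs xs n" and t: "t \<in> Fset J cs xs n" and eq: "?f s = ?f t"
    have eqj: "\<forall>j\<in>J. cs s j = cs t j" using eq by blast
    show "s = t"
    proof (rule ccontr)
      assume "s \<noteq> t"
      hence "s < t \<or> t < s" by arith
      then show False
      proof
        assume "s < t" then show False using s t eqj by (auto simp: Fset_def)
      next
        assume "t < s" then show False using s t eqj by (auto simp: Fset_def)
      qed
    qed
  qed
  have fF: "finite (Fset J cs xs n)" by (auto simp: Fset_def)
  have "card (Fset J cs xs n) = card (?f ` Fset J cs xs n)" using inj by (simp add: card_image)
  also have "\<dots> \<le> card (Pow J)" using assms by (intro card_mono) auto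
  also have "\<dots> = 2 ^ card J" using assms by (simp add: card_Pow)
  finally show ?thesis .
qed

lemma Fset_empty: "(\<And>t. xs t) \<Longrightarrow> Fset J cs xs n = {}"
  by (auto simp: Fset_def)

lemma alg2_inv:
  assumes fin: "finite J" and SJ: "S \<subseteq> J" and xsS: "\<And>t. xs t = (\<forall>j\<in>S. cs t j)"
  shows "seq_prob (pi_cond J cs xs) n \<ge> (1 / (real n + 1)) ^ Suc (card (J - Wset J cs xs (Suc n)))"
proof (induction n)
  case 0
  have "Wset J cs xs (Suc 0) = J" by (auto simp: Wset_def)
  then show ?case by (simp add: seq_prob_0)
next
  case (Suc n)
  let ?W = "Wset J cs xs (Suc n)"
  let ?W' = "Wset J cs xs (Suc (Suc n))"
  let ?B = "{j\<in>?W. \<not> cs (Suc n) j}"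
  let ?c = "card (J - ?W)"
  let ?c' = "card (J - ?W')"
  define p where "p = real n + 1"
  define q where "q = real n + 2"
  have qeq: "real (Suc n) + 1 = q" by (simp add: q_def)
  have p0: "0 < p" and pq: "p \<le> q" and q1: "1 \<le> q" by (auto simp: p_def q_def)
  have SW: "S \<subseteq> ?W" using SJ xsS by (auto simp: Wset_def)
  have WJ: "?W \<subseteq> J" by (auto simp: Wset_def)
  have W'eq: "?W' = (if xs (Suc n) then ?W - ?B else ?W)"
    by (auto simp: Wset_def less_Suc_eq)
  have y: "pi_y J cs xs (Suc n) = (\<forall>j\<in>?W. cs (Suc n) j)"
    by (simp add: pi_y_def Wset_def)
  have IH: "(1/p) ^ Suc ?c \<le> seq_prob (pi_cond J cs xs) n" using Suc.IH by (simp add: p_def)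
  have qp: "(1/q) ^ m \<le> (1/p) ^ m" for m
    using p0 pq by (intro power_mono) (auto simp: divide_simps)
  show ?case
  proof (cases "xs (Suc n) = pi_y J cs xs (Suc n)")
    case True
    have WW: "?W' = ?W" using True W'eq y by auto
    have c: "pi_cond J cs xs (Suc n) = p / q"
      using True by (simp add: pi_cond_def p_def q_def add_ac)
    have "(1/q) ^ Suc ?c = (1/q)^?c / q" by (simp add: field_simps)
    also have "\<dots> \<le> (1/p)^?c / q" using qp q1 by (intro divide_right_mono) auto
    also have "\<dots> = (1/p) ^ Suc ?c * (p / q)" using p0 by (simp add: field_simps)
    also have "\<dots> \<le> seq_prob (pi_cond J cs xs) n * (p / q)"
      using IH p0 q1 by (intro mult_right_mono) auto
    finally show ?thesis unfolding seq_prob_Suc c WW qeq .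
  next
    case False
    have xt: "xs (Suc n)" and ny: "\<not> (\<forall>j\<in>?W. cs (Suc n) j)" using False xsS SW y by auto
    have c: "pi_cond J cs xs (Suc n) = 1 / q"
      using False by (simp add: pi_cond_def q_def)
    have sub: "J - ?W \<subset> J - ?W'" using xt W'eq ny WJ by auto
    have "finite (J - ?W')" using fin by auto
    then have cc: "Suc ?c \<le> ?c'" using psubset_card_mono[OF _ sub] by simp
    have "(1/q) ^ Suc ?c' \<le> (1/q) ^ Suc (Suc ?c)"
      using q1 cc by (intro power_decreasing) (auto simp: divide_simps)
    also have "\<dots> = (1/q) ^ Suc ?c * (1/q)" by simp
    also have "\<dots> \<le> (1/p) ^ Suc ?c * (1/q)" by (intro mult_right_mono qp) (use q1 in auto)
    also have "\<dots> \<le> seq_prob (pi_cond J cs xs) n * (1/q)"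
      using IH q1 by (intro mult_right_mono) auto
    finally show ?thesis unfolding seq_prob_Suc c qeq .
  qed
qed


lemma ln2_ge_half: "1/2 \<le> ln (2::real)"
proof -
  have "exp (1/2::real) ^ 2 = exp 1" by (simp add: exp_double[symmetric] power2_eq_square exp_add[symmetric])
  also have "\<dots> \<le> 3" by (rule exp_le)
  finally have "exp (1/2::real) ^ 2 \<le> 2 ^ 2" by simp
  then have "exp (1/2::real) \<le> 2" by (rule power2_le_imp_le) simp
  then have "ln (exp (1/2::real)) \<le> ln 2" by (subst ln_le_cancel_iff) auto
  then show ?thesis by simp
qed

lemma nat_aux: "2 \<le> (D::nat) \<Longrightarrow> 2 ^ (D + 2) \<le> D * 2 ^ (2 * D - 1)"
proof -
  assume "2 \<le> D"
  then obtain m where D: "D = m + 2" by (metis add.commute le_Suc_ex)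
  have "(2::nat) ^ (m + 4) = 2 ^ (m+3) * 2" by (simp add: power_add)
  also have "\<dots> \<le> 2 ^ (2*m+3) * (m+2)" by (intro mult_mono power_increasing) auto
  finally have f: "(2::nat) ^ (m + 4) \<le> 2 ^ (2*m+3) * (m+2)" .
  have "2 ^ (D + 2) = (2::nat)^(m+4)" "2*D-1 = 2*m+3" using D by (auto simp: power_add)
  then show ?thesis using f D by (metis mult.commute)
qed

lemma one_minus_alpha_bound:
  assumes "2 \<le> D"
  shows "1 / 2 ^ (2*D-1) \<le> 1 - (2::real) powr (-(real D / 2^D))"
proof -
  define x :: real where "x = real D / 2^D"
  have x0: "0 < x" using assms by (simp add: x_def)
  have "real D \<le> 2 ^ D" using less_exp[of D] by (metis of_nat_le_iff of_nat_numeral of_nat_power less_imp_le)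
  then have x1: "x \<le> 1" by (simp add: x_def)
  define y where "y = x * ln 2"
  have y0: "0 < y" using x0 by (simp add: y_def)
  have y1: "y \<le> 1" using x1 x0 ln_2_less_1 by (simp add: y_def) (metis less_eq_real_def mult_le_one ln_ge_zero one_le_numeral)
  have "1 + y \<le> exp y" by (rule exp_ge_add_one_self)
  also have "exp y = 2 powr x" by (simp add: powr_def y_def mult.commute)
  finally have e: "1 + y \<le> 2 powr x" .
  have "2 powr (-x) = 1 / 2 powr x" by (simp add: powr_minus divide_simps)
  also have "\<dots> \<le> 1 / (1 + y)" using e y0 by (intro divide_left_mono) auto
  finally have a: "2 powr (-x) \<le> 1 / (1+y)" .
  have "x / 4 \<le> y / 2" using ln2_ge_half x0 by (simp add: y_def)
  also have "y / 2 \<le> 1 - 1/(1+y)" using y0 y1 by (simp add: field_simps)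
  also have "\<dots> \<le> 1 - 2 powr (-x)" using a by simp
  finally have b: "x / 4 \<le> 1 - 2 powr (-x)" .
  have "real (2 ^ (D + 2)) \<le> real (D * 2 ^ (2 * D - 1))" using nat_aux[OF assms] by linarith
  then have "(2::real) ^ (D + 2) \<le> real D * 2 ^ (2 * D - 1)" by simp
  then have "1 / 2 ^ (2*D-1) \<le> x / 4" by (simp add: x_def field_simps)
  with b show ?thesis by (simp add: x_def)
qed

lemma S_sub_W: "(\<And>t. xs t = (\<forall>j\<in>S. cs t j)) \<Longrightarrow> S \<subseteq> J \<Longrightarrow> S \<subseteq> Wset J cs xs s"
  by (auto simp: Wset_def)

lemma alg1_bound:
  assumes fin: "finite J" and SJ: "S \<subseteq> J" and xsS: "\<And>t. xs t = (\<forall>j\<in>S. cs t j)"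
  shows "seq_prob (zeta_cond J cs xs) n \<ge> 1 / 2 ^ (2 * card J ^ 2)"
proof -
  let ?a = "zeta_alpha J"
  let ?c = "card (J - Wset J cs xs (Suc n))"
  let ?f = "card (Fset J cs xs n)"
  let ?D = "card J"
  have inv: "(1 - ?a) ^ ?c * ?a ^ ?f \<le> seq_prob (zeta_cond J cs xs) n"
    by (rule alg1_inv[OF fin SJ xsS])
  have a0: "0 < ?a" and a1: "?a \<le> 1" by (rule alpha_pos, rule alpha_le1)
  have cD: "?c \<le> ?D" using fin by (intro card_mono) auto
  have fD: "?f \<le> 2 ^ ?D" by (rule Fset_card[OF fin])
  have af: "?a ^ (2 ^ ?D) \<le> ?a ^ ?f" by (rule power_decreasing[OF fD]) (use a0 a1 in auto)
  have a2D: "?a ^ (2 ^ ?D) = 1 / 2 ^ ?D"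
  proof -
    have "?a ^ (2 ^ ?D) = ?a powr (real (2 ^ ?D))" by (rule powr_realpow[symmetric, OF a0])
    also have "\<dots> = 2 powr (- real ?D)" unfolding zeta_alpha_def powr_powr by simp
    also have "\<dots> = 1 / 2 ^ ?D" by (simp add: powr_minus powr_realpow divide_simps)
    finally show ?thesis .
  qed
  consider "?D = 0" | "?D = 1" | "2 \<le> ?D" by linarith
  then show ?thesis
  proof cases
    case 1
    then have "J = {}" using fin by simp
    then show ?thesis using inv a0 by (simp add: zeta_alpha_def)
  next
    case 2
    have ah: "?a = 2 powr (-(1/2))" using 2 by (simp add: zeta_alpha_def)
    have "4/3 \<le> sqrt (2::real)" by (rule real_le_rsqrt) (simp add: power2_eq_square)
    then have a34: "?a \<le> 3/4" unfolding ah by (simp add: powr_minus powr_half_sqrt divide_simps)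
    show ?thesis
    proof (cases "S = {}")
      case True
      then have "Fset J cs xs n = {}" using xsS by (intro Fset_empty) auto
      then have "(1 - ?a) ^ ?c \<le> seq_prob (zeta_cond J cs xs) n" using inv by simp
      moreover have "(1 - ?a) ^ 1 \<le> (1 - ?a) ^ ?c"
        by (intro power_decreasing) (use cD 2 a1 a0 in auto)
      ultimately show ?thesis using a34 2 by simp
    next
      case False
      have fS: "finite S" using fin SJ by (rule finite_subset[rotated])
      have "card S \<noteq> 0" using False fS by simp
      then have "card J \<le> card S" using 2 by simp
      then have SJe: "S = J" by (rule card_seteq[OF fin SJ])
      have "J - Wset J cs xs (Suc n) = {}" using xsS SJe by (auto simp: Wset_def)
      then have "?c = 0" by (metis card.empty)
      then have "?a ^ ?f \<le> seq_prob (zeta_cond J cs xs) n" using inv by simp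
      then show ?thesis using af a2D 2 by simp
    qed
  next
    case 3
    have b: "1 / 2 ^ (2*?D-1) \<le> 1 - ?a" using one_minus_alpha_bound[OF 3] by (simp add: zeta_alpha_def)
    have "(1 / 2 ^ (2*?D-1)) ^ ?D \<le> (1 - ?a) ^ ?D" by (intro power_mono b) simp
    also have "\<dots> \<le> (1 - ?a) ^ ?c" using cD a0 a1 by (intro power_decreasing) auto
    finally have p1: "(1 / 2 ^ (2*?D-1)) ^ ?D \<le> (1 - ?a) ^ ?c" .
    have "(1 / 2 ^ (2*?D-1)) ^ ?D * (1 / 2 ^ ?D) \<le> (1 - ?a) ^ ?c * ?a ^ ?f"
      using p1 af a2D a0 a1 by (intro mult_mono) auto
    also note inv
    finally have p: "(1 / 2 ^ (2*?D-1)) ^ ?D * (1 / 2 ^ ?D) \<le> seq_prob (zeta_cond J cs xs) n" .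
    have e: "(2*?D-1) * ?D + ?D = 2 * ?D ^ 2" using 3 by (cases ?D) (auto simp: power2_eq_square algebra_simps)
    have "(1 / 2 ^ (2*?D-1)) ^ ?D * (1 / 2 ^ ?D) = (1::real) / 2 ^ ((2*?D-1) * ?D + ?D)"
      by (simp add: power_add power_mult power_divide)
    with p e show ?thesis by simp
  qed
qed


lemma literals_eq: "literals d = Pos ` {..<d} \<union> Neg ` {..<d}"
proof (rule set_eqI)
  fix l show "l \<in> literals d \<longleftrightarrow> l \<in> Pos ` {..<d} \<union> Neg ` {..<d}"
    by (cases l) (auto simp: literals_def)
qed

lemma literals_fin: "finite (literals d)" by (simp add: literals_eq)

lemma literals_card: "card (literals d) = 2 * d"
proof -
  have "card (Pos ` {..<d} \<union> Neg ` {..<d}) = card (Pos ` {..<d}) + card (Neg ` {..<d})"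
    by (rule card_Un_disjoint) auto
  also have "\<dots> = d + d" by (simp add: card_image inj_on_def)
  finally show ?thesis by (simp add: literals_eq)
qed

lemma tuples_eq: "tuples k d = {xs. set xs \<subseteq> literals d \<and> length xs = k}"
  by (auto simp: tuples_def)

lemma tuples_fin: "finite (tuples k d)"
  unfolding tuples_eq by (rule finite_lists_length_eq[OF literals_fin])

lemma tuples_card: "card (tuples k d) = (2*d)^k"
  unfolding tuples_eq card_lists_length_eq[OF literals_fin] literals_card ..

theorem corollary6:
  fixes n k d :: nat
    and as :: "nat \<Rightarrow> nat \<Rightarrow> bool"
    and h :: "(nat \<Rightarrow> bool) \<Rightarrow> bool"
  assumes "h \<in> kCNF k d"
  defines "xs \<equiv> (\<lambda>t. h (as t))"
  shows "(seq_prob (Alg1_cond k d as xs) n > 0 \<and>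
         log_loss (Alg1_cond k d as xs) n \<le> 2 ^ (2 * k + 1) * real d ^ (2 * k)) \<and>
         (seq_prob (Alg2_cond k d as xs) n > 0 \<and>
         log_loss (Alg2_cond k d as xs) n \<le> (2 ^ k * real d ^ k + 1) * log 2 (real n + 1))"
proof -
  obtain cls where cls: "\<forall>c\<in>set cls. length c = k \<and> set c \<subseteq> literals d"
    and hdef: "h = (\<lambda>a. \<forall>c\<in>set cls. clause_eval c a)"
    using assms(1) unfolding kCNF_def by blast
  let ?J = "tuples k d"
  let ?S = "set cls"
  let ?cs = "\<lambda>t. phi (as t)"
  let ?D = "card ?J"
  have SJ: "?S \<subseteq> ?J" using cls by (auto simp: tuples_def)
  have xsS: "xs t = (\<forall>j\<in>?S. ?cs t j)" for t by (simp add: xs_def hdef phi_def)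
  have D: "real ?D = 2 ^ k * real d ^ k" by (simp add: tuples_card power_mult_distrib)
  have b1: "1 / 2 ^ (2 * ?D ^ 2) \<le> seq_prob (Alg1_cond k d as xs) n"
    unfolding Alg1_cond_def by (rule alg1_bound[OF tuples_fin SJ xsS])
  have p1: "0 < seq_prob (Alg1_cond k d as xs) n"
    by (rule less_le_trans[OF _ b1]) simp
  have "log 2 (1 / 2 ^ (2 * ?D ^ 2)) \<le> log 2 (seq_prob (Alg1_cond k d as xs) n)"
    using b1 p1 by (subst log_le_cancel_iff) auto
  moreover have "log 2 (1 / (2::real) ^ (2 * ?D ^ 2)) = - real (2 * ?D ^ 2)"
    by (simp add: log_divide log_nat_power)
  ultimately have l1: "log_loss (Alg1_cond k d as xs) n \<le> real (2 * ?D ^ 2)"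
    by (simp add: log_loss_def)
  have "real (2 * ?D ^ 2) = 2 ^ (2 * k + 1) * real d ^ (2 * k)"
    by (simp only: of_nat_mult of_nat_power D) (simp add: power_mult_distrib power_mult[symmetric] power_add mult_ac)
  with l1 have A1: "log_loss (Alg1_cond k d as xs) n \<le> 2 ^ (2 * k + 1) * real d ^ (2 * k)" by simp
  let ?c = "card (?J - Wset ?J ?cs xs (Suc n))"
  have b2': "(1 / (real n + 1)) ^ Suc ?c \<le> seq_prob (Alg2_cond k d as xs) n"
    unfolding Alg2_cond_def by (rule alg2_inv[OF tuples_fin SJ xsS])
  have cD: "?c \<le> ?D" using tuples_fin by (intro card_mono) auto
  have "(1 / (real n + 1)) ^ Suc ?D \<le> (1 / (real n + 1)) ^ Suc ?c"
    using cD by (intro power_decreasing) auto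
  with b2' have b2: "(1 / (real n + 1)) ^ Suc ?D \<le> seq_prob (Alg2_cond k d as xs) n" by linarith
  have p2: "0 < seq_prob (Alg2_cond k d as xs) n"
    by (rule less_le_trans[OF _ b2]) simp
  have "log 2 ((1 / (real n + 1)) ^ Suc ?D) \<le> log 2 (seq_prob (Alg2_cond k d as xs) n)"
    using b2 p2 by (subst log_le_cancel_iff) auto
  moreover have "log 2 ((1 / (real n + 1)) ^ Suc ?D) = - (real ?D + 1) * log 2 (real n + 1)"
    by (simp add: log_nat_power log_divide algebra_simps)
  ultimately have "log_loss (Alg2_cond k d as xs) n \<le> (real ?D + 1) * log 2 (real n + 1)"
    unfolding log_loss_def by (simp add: algebra_simps)
  then have A2: "log_loss (Alg2_cond k d as xs) n \<le> (2 ^ k * real d ^ k + 1) * log 2 (real n + 1)"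
    by (simp only: D)
  show ?thesis using p1 A1 p2 A2 by blast
qed

end
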